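(* Let $q\ge1$, $\lambda$ a primitive $q$th root of unity, $g(z)=\lambda z+O(z^2)$ holomorphic near $0$ with $f:=g^{\circ q}$ of the form $f(z)=z+z^{q+1}+bz^{2q+1}+O(z^{2q+2})$, and $0<r_0<1$ such that $f$ is univalent in a neighborhood of $\overline{\mathbb D}(0,r_0)$, $0$ is its only fixed point in $\overline{\mathbb D}(0,r_0)$ and $\operatorname{Re}(f')>0$ there. Let $g_n(z)=\lambda_nz+O(z^2)$, $|\lambda_n|\ne1$, with $f_n:=g_n^{\circ q}$ holomorphic near $\overline{\mathbb D}(0,r_0)$ and $f_n\to f$ uniformly on $\overline{\mathbb D}(0,r_0)$; for large $n$ the fixed points of $f_n$ in $\overline{\mathbb D}(0,r_0)$ are $0$ and the points of a $q$-cycle $\mathscr O_n$ of $g_n$. Let $0<r_1<r_0/2$ be such that $\overline{\mathbb D}(0,r_1)$ is mapped univalently into $\mathbb D(0,r_0)$ by $f$ and $f^{-1}$ and $\sup_{|z|\le r_1}|f_n(z)-z|\le r_1/2$ for all large $n$. Then there is $0<r_2<r_1$ such that for all sufficiently large $n$: if $z_0$, $z_1:=f_n(z_0)$, $z_2:=f_n(z_1)$ lie in $\mathbb D(0,r_2)$ and are not fixed by $f_n$, then the segment $[z_1,z_2]$ and the curve $f_n([z_0,z_1])$ are homotopic (with fixed endpoints) in $\mathbb D(0,r_1)\setminus(\{0\}\cup\mathscr O_n)$. *)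

theory Defs
  imports "HOL-Complex_Analysis.Complex_Analysis" "HOL-Library.Landau_Symbols"
begin

definition primitive_root_of_unity :: "nat \<Rightarrow> complex \<Rightarrow> bool" where
  "primitive_root_of_unity q lam \<longleftrightarrow> q \<ge> 1 \<and> lam ^ q = 1 \<and> (\<forall>k. 0 < k \<and> k < q \<longrightarrow> lam ^ k \<noteq> 1)"

definition is_q_cycle :: "(complex \<Rightarrow> complex) \<Rightarrow> nat \<Rightarrow> complex set \<Rightarrow> bool" where
  "is_q_cycle g q C \<longleftrightarrow> (\<exists>w. (g ^^ q) w = w \<and> C = (\<lambda>k. (g ^^ k) w) ` {..<q} \<and> card C = q)"

end

theory Submission
  imports Defs
begin

lemma mvt_near_id:
  fixes F :: "complex \<Rightarrow> complex"
  assumes T: "open T" "ball 0 R \<subseteq> T" "F holomorphic_on T"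
    and D: "\<forall>x\<in>ball 0 R. norm (deriv F x - 1) \<le> 1/4"
    and a: "a \<in> ball 0 R" and b: "b \<in> ball 0 R"
  shows "norm (F a - F b - (a - b)) \<le> 1/4 * norm (a - b)"
proof -
  have "norm ((\<lambda>z. F z - z) a - (\<lambda>z. F z - z) b) \<le> 1/4 * norm (a - b)"
  proof (rule field_differentiable_bound[where S="ball 0 R" and f'="\<lambda>z. deriv F z - 1"])
    fix z :: complex assume z: "z \<in> ball 0 R"
    have "(F has_field_derivative deriv F z) (at z within ball 0 R)"
      using holomorphic_derivI[OF T(3) T(1)] z T(2) by blast
    then show "((\<lambda>z. F z - z) has_field_derivative deriv F z - 1) (at z within ball 0 R)"
      by (intro derivative_intros)
  qed (use D a b in auto)
  then show ?thesis by (simp add: algebra_simps)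
qed

lemma segment_avoid:
  fixes F :: "complex \<Rightarrow> complex"
  assumes T: "open T" "ball 0 R \<subseteq> T" "F holomorphic_on T"
    and D: "\<forall>x\<in>ball 0 R. norm (deriv F x - 1) \<le> 1/4"
    and p: "p \<in> ball 0 R" "F p = p"
    and z: "z0 \<in> ball 0 R" "z1 \<in> ball 0 R" "z1 = F z0" "z2 = F z1" "F z0 \<noteq> z0"
    and t: "0 \<le> t" "t \<le> 1" and s: "0 \<le> s" "s \<le> 1"
    and w: "w = z0 + of_real t * (z1 - z0)"
    and w': "w \<in> ball 0 R"
    and x: "x = (1 - of_real s) * (z1 + of_real t * (z2 - z1)) + of_real s * F w"
  shows "x \<noteq> p"
proof
  assume xp: "x = p"
  note M = mvt_near_id[OF T D]
  define u where "u = z0 - p"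
  have u0: "u \<noteq> 0" using z p unfolding u_def by auto
  define e0 where "e0 = z1 - p - u"
  define e1 where "e1 = z2 - z1"
  define e2 where "e2 = F w - p - (w - p)"
  have ne0: "norm e0 \<le> 1/4 * norm u"
    using M[OF z(1) p(1)] z p unfolding e0_def u_def by simp
  have nz1: "norm (z1 - p) \<le> 5/4 * norm u"
  proof -
    have "z1 - p = u + e0" unfolding e0_def by simp
    then have "norm (z1 - p) \<le> norm u + norm e0" by (metis norm_triangle_ineq)
    then show ?thesis using ne0 by simp
  qed
  have ne1: "norm e1 \<le> 5/16 * norm u"
  proof -
    have "norm e1 \<le> 1/4 * norm (z1 - p)"
      using M[OF z(2) p(1)] z p unfolding e1_def by simp
    then show ?thesis using nz1 by simp
  qed
  have wp: "w - p = u + of_real t * e0" unfolding w e0_def u_def by simp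
  have nw: "norm (w - p) \<le> 5/4 * norm u"
  proof -
    have "norm (w - p) \<le> norm u + norm (of_real t * e0)" unfolding wp by (metis norm_triangle_ineq)
    also have "norm (of_real t * e0) \<le> norm e0"
      using t by (simp add: norm_mult mult_left_le_one_le)
    finally show ?thesis using ne0 by simp
  qed
  have ne2: "norm e2 \<le> 5/16 * norm u"
  proof -
    have "norm e2 \<le> 1/4 * norm (w - p)"
      using M[OF w' p(1)] p unfolding e2_def by simp
    then show ?thesis using nw by simp
  qed
  have ex: "x - p - u = (1 - of_real s) * (e0 + of_real t * e1) + of_real s * (of_real t * e0 + e2)"
    unfolding x e0_def e1_def e2_def u_def w by (simp add: algebra_simps)
  have A: "norm (e0 + of_real t * e1) \<le> 9/16 * norm u"
  proof -
    have "norm (e0 + of_real t * e1) \<le> norm e0 + norm (of_real t * e1)" by (rule norm_triangle_ineq)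
    also have "norm (of_real t * e1) \<le> norm e1"
      using t by (simp add: norm_mult mult_left_le_one_le)
    finally show ?thesis using ne0 ne1 by simp
  qed
  have B: "norm (of_real t * e0 + e2) \<le> 9/16 * norm u"
  proof -
    have "norm (of_real t * e0 + e2) \<le> norm (of_real t * e0) + norm e2" by (rule norm_triangle_ineq)
    also have "norm (of_real t * e0) \<le> norm e0"
      using t by (simp add: norm_mult mult_left_le_one_le)
    finally show ?thesis using ne0 ne2 by simp
  qed
  have "norm (x - p - u) \<le> norm ((1 - of_real s) * (e0 + of_real t * e1)) + norm (of_real s * (of_real t * e0 + e2))"
    unfolding ex by (rule norm_triangle_ineq)
  also have "norm ((1 - of_real s) * (e0 + of_real t * e1)) = (1 - s) * norm (e0 + of_real t * e1)"
  proof -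
    have "(1 - of_real s :: complex) = of_real (1 - s)" by simp
    then show ?thesis using s by (simp only: norm_mult norm_of_real)
  qed
  also have "norm (of_real s * (of_real t * e0 + e2)) = s * norm (of_real t * e0 + e2)"
    using s by (simp add: norm_mult)
  also have "(1 - s) * norm (e0 + of_real t * e1) + s * norm (of_real t * e0 + e2)
      \<le> (1 - s) * (9/16 * norm u) + s * (9/16 * norm u)"
    using A B s by (intro add_mono mult_left_mono) auto
  also have "(1 - s) * (9/16 * norm u) + s * (9/16 * norm u) = 9/16 * norm u" by (simp add: field_simps)
  finally have "norm (x - p - u) \<le> 9/16 * norm u" .
  moreover have "x - p - u = - u" using xp by simp
  ultimately show False using u0 by simp
qed


lemma homotopy_part:
  fixes F :: "complex \<Rightarrow> complex"
  assumes T: "open T" "ball 0 R \<subseteq> T" "F holomorphic_on T"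
    and D: "\<forall>x\<in>ball 0 R. norm (deriv F x - 1) \<le> 1/4"
    and F0: "F 0 = 0" and R: "R \<le> r1"
    and P: "\<forall>p\<in>P. F p = p"
    and z: "z0 \<in> ball 0 (R/2)" "z1 \<in> ball 0 (R/2)" "z2 \<in> ball 0 (R/2)"
           "z1 = F z0" "z2 = F z1" "F z0 \<noteq> z0"
  shows "homotopic_paths (ball 0 r1 - P) (linepath z1 z2) (F \<circ> linepath z0 z1)"
proof (rule homotopic_paths_linear)
  have sub: "ball 0 (R/2) \<subseteq> ball 0 R" using zero_le_dist[of 0] by (auto simp: subset_eq) (smt (verit) zero_le_dist)
  have seg01: "closed_segment z0 z1 \<subseteq> ball 0 (R/2)"
    using z by (intro closed_segment_subset) auto
  have seg12: "closed_segment z1 z2 \<subseteq> ball 0 (R/2)"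
    using z by (intro closed_segment_subset) auto
  show "path (linepath z1 z2)" by simp
  show "path (F \<circ> linepath z0 z1)"
    unfolding path_def
  proof (rule continuous_on_compose)
    show "continuous_on {0..1} (linepath z0 z1)" by (simp add: continuous_on_linepath)
    show "continuous_on (linepath z0 z1 ` {0..1}) F"
      using holomorphic_on_imp_continuous_on[OF T(3)] seg01 sub T(2)
      by (metis continuous_on_subset linepath_image_01 order_trans)
  qed
  show "pathstart (F \<circ> linepath z0 z1) = pathstart (linepath z1 z2)"
    using z by (simp add: pathstart_def linepath_def)
  show "pathfinish (F \<circ> linepath z0 z1) = pathfinish (linepath z1 z2)"
    using z by (simp add: pathfinish_def linepath_def)
  fix t :: real assume t: "t \<in> {0..1}"
  define w where "w = linepath z0 z1 t"
  define a where "a = linepath z1 z2 t"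
  have w: "w \<in> ball 0 (R/2)" using seg01 t unfolding w_def
    by (metis linepath_image_01 image_eqI subsetD)
  have a: "a \<in> ball 0 (R/2)" using seg12 t unfolding a_def
    by (metis linepath_image_01 image_eqI subsetD)
  have R0: "0 < R" using w norm_ge_zero[of w] by simp (smt (verit) norm_ge_zero)
  have "norm (F w - F 0 - (w - 0)) \<le> 1/4 * norm (w - 0)"
    using mvt_near_id[OF T D, of w 0] w sub R0 by (auto simp: dist_norm)
  then have "norm (F w - w) \<le> 1/4 * norm w" using F0 by simp
  then have "norm (F w) \<le> 5/4 * norm w" using norm_triangle_ineq[of "F w - w" w] by simp
  moreover have "norm w < R/2" using w by simp
  ultimately have Fw: "F w \<in> ball 0 R" using R0 by simp
  show "closed_segment (linepath z1 z2 t) ((F \<circ> linepath z0 z1) t) \<subseteq> ball 0 r1 - P"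
  proof
    fix x assume "x \<in> closed_segment (linepath z1 z2 t) ((F \<circ> linepath z0 z1) t)"
    then have xs: "x \<in> closed_segment a (F w)" by (simp add: a_def w_def)
    have "closed_segment a (F w) \<subseteq> ball 0 R" using a Fw sub R0
      by (intro closed_segment_subset) auto
    with xs have xR: "x \<in> ball 0 R" by auto
    then have "x \<in> ball 0 r1" using R by auto
    moreover have "x \<notin> P"
    proof
      assume xP: "x \<in> P"
      obtain s where s: "0 \<le> s" "s \<le> 1" "x = (1 - s) *\<^sub>R a + s *\<^sub>R F w"
        using xs by (auto simp: in_segment)
      have "x \<noteq> x"
      proof (rule segment_avoid[OF T D xR _ _ _ _ _ _ _ _ s(1,2)])
        show "F x = x" using P xP by auto
        show "z0 \<in> ball 0 R" "z1 \<in> ball 0 R" using z(1,2) sub by blast+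
        show "z1 = F z0" "z2 = F z1" "F z0 \<noteq> z0" using z by auto
        show "0 \<le> t" "t \<le> 1" using t by auto
        show "w = z0 + of_real t * (z1 - z0)"
          unfolding w_def linepath_def by (simp add: scaleR_conv_of_real algebra_simps)
        show "w \<in> ball 0 R" using w sub by blast
        show "x = (1 - of_real s) * (z1 + of_real t * (z2 - z1)) + of_real s * F w"
          unfolding s(3) a_def linepath_def by (simp add: scaleR_conv_of_real algebra_simps)
      qed
      then show False by simp
    qed
    ultimately show "x \<in> ball 0 r1 - P" by simp
  qed
qed


lemma funpow_fix0:
  fixes g :: "complex \<Rightarrow> complex"
  assumes "g 0 = 0" shows "(g ^^ k) 0 = 0"
  using assms by (induction k) simp_all

lemma deriv_at0_one:
  fixes f :: "complex \<Rightarrow> complex" and q :: nat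
  assumes q: "q \<ge> 1" and S: "open S" "0 \<in> S" "f holomorphic_on S" and f0: "f 0 = 0"
    and f_exp: "(\<lambda>z. f z - (z + z ^ (q + 1) + b * z ^ (2 * q + 1))) \<in> O[at 0](\<lambda>z. z ^ (2 * q + 2))"
  shows "deriv f 0 = 1"
proof -
  obtain c where c: "c > 0"
    "eventually (\<lambda>z. norm (f z - (z + z ^ (q + 1) + b * z ^ (2 * q + 1))) \<le> c * norm (z ^ (2 * q + 2))) (at 0)"
    using f_exp by (elim landau_o.bigE)
  define h where "h z = f z / z - (1 + z ^ q + b * z ^ (2 * q))" for z
  have ev: "eventually (\<lambda>z. norm (h z) \<le> c * norm z ^ (2 * q + 1)) (at (0::complex))"
    using c(2) eventually_at[of "\<lambda>z. z \<noteq> 0" 0 UNIV]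
  proof -
    have "eventually (\<lambda>z. z \<noteq> (0::complex)) (at 0)" by (simp add: eventually_at_filter)
    with c(2) show ?thesis
    proof eventually_elim
      case (elim z)
      have "h z = (f z - (z + z ^ (q + 1) + b * z ^ (2 * q + 1))) / z"
        using elim(2) unfolding h_def by (simp add: field_simps power_add power_mult_distrib)
      then have "norm (h z) = norm (f z - (z + z ^ (q + 1) + b * z ^ (2 * q + 1))) / norm z"
        by (simp add: norm_divide)
      also have "\<dots> \<le> c * norm (z ^ (2 * q + 2)) / norm z"
        using elim(1) by (simp add: divide_right_mono)
      also have "\<dots> = c * norm z ^ (2 * q + 1)"
        using elim(2) by (simp add: norm_power norm_mult)
      finally show ?case .
    qed
  qed
  have "isCont (\<lambda>z::complex. c * norm z ^ (2 * q + 1)) 0"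
    by (intro continuous_intros)
  then have "((\<lambda>z::complex. c * norm z ^ (2 * q + 1)) \<longlongrightarrow> c * norm (0::complex) ^ (2 * q + 1)) (at 0)"
    by (simp add: isCont_def)
  then have "((\<lambda>z. c * norm z ^ (2 * q + 1)) \<longlongrightarrow> 0) (at (0::complex))" by simp
  with ev have h0: "(h \<longlongrightarrow> 0) (at 0)" by (rule Lim_null_comparison)
  have "((\<lambda>z. 1 + z ^ q + b * z ^ (2 * q)) \<longlongrightarrow> 1 + 0 ^ q + b * 0 ^ (2 * q)) (at (0::complex))"
    by (intro tendsto_intros)
  then have p1: "((\<lambda>z. 1 + z ^ q + b * z ^ (2 * q)) \<longlongrightarrow> 1) (at (0::complex))" using q by (simp add: power_0_left)
  have "((\<lambda>z. h z + (1 + z ^ q + b * z ^ (2 * q))) \<longlongrightarrow> 0 + 1) (at 0)"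
    by (intro tendsto_add h0 p1)
  then have L1: "((\<lambda>z. f z / z) \<longlongrightarrow> 1) (at 0)" by (simp add: h_def)
  have "(f has_field_derivative deriv f 0) (at 0)"
    using holomorphic_derivI[OF S(3) S(1) S(2)] by blast
  then have "((\<lambda>z. (f (0 + z) - f 0) / z) \<longlongrightarrow> deriv f 0) (at 0)"
    by (simp add: DERIV_def)
  then have L2: "((\<lambda>z. f z / z) \<longlongrightarrow> deriv f 0) (at 0)" using f0 by simp
  show ?thesis using tendsto_unique[OF _ L2 L1] by simp
qed

lemma deriv_close:
  fixes F G :: "complex \<Rightarrow> complex"
  assumes T: "open T" "cball 0 r0 \<subseteq> T" "F holomorphic_on T" "G holomorphic_on T"
    and r0: "0 < r0" and e: "\<forall>z\<in>cball 0 r0. norm (F z - G z) \<le> e"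
    and xi: "norm xi \<le> r0 / 2"
  shows "norm (deriv F xi - deriv G xi) \<le> e / (r0 / 2)"
proof -
  have sub: "cball xi (r0/2) \<subseteq> cball 0 r0"
  proof
    fix x assume "x \<in> cball xi (r0/2)"
    then have "norm (x - xi) \<le> r0/2" by (simp add: dist_norm norm_minus_commute)
    then have "norm x \<le> r0" using xi norm_triangle_ineq[of "x - xi" xi] by simp
    then show "x \<in> cball 0 r0" by simp
  qed
  have hol: "(\<lambda>z. F z - G z) holomorphic_on T" using T by (intro holomorphic_intros)
  have "xi \<in> cball xi (r0/2)" using r0 by simp
  then have xiT: "xi \<in> T" using sub T(2) by blast
  have "norm ((deriv ^^ 1) (\<lambda>z. F z - G z) xi) \<le> fact 1 * e / (r0/2) ^ 1"
  proof (rule Cauchy_inequality)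
    show "(\<lambda>z. F z - G z) holomorphic_on ball xi (r0 / 2)"
      using hol sub T(2) ball_subset_cball by (meson holomorphic_on_subset order_trans)
    show "continuous_on (cball xi (r0 / 2)) (\<lambda>z. F z - G z)"
      using holomorphic_on_imp_continuous_on[OF hol] sub T(2) by (meson continuous_on_subset order_trans)
    show "0 < r0 / 2" using r0 by simp
    fix x assume "norm (xi - x) = r0 / 2"
    then have "x \<in> cball xi (r0/2)" by (simp add: dist_norm)
    then show "norm (F x - G x) \<le> e" using e sub by auto
  qed
  moreover have "deriv (\<lambda>z. F z - G z) xi = deriv F xi - deriv G xi"
    using T xiT by (intro deriv_diff holomorphic_on_imp_differentiable_at) auto
  ultimately show ?thesis by simp
qed


theorem lemma4p3:
  fixes q :: nat and lam b :: complex and g f :: "complex \<Rightarrow> complex"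
    and gn fn :: "nat \<Rightarrow> complex \<Rightarrow> complex" and lamn :: "nat \<Rightarrow> complex"
    and Orb :: "nat \<Rightarrow> complex set" and r0 r1 :: real and S :: "complex set"
  assumes q: "q \<ge> 1"
    and lam: "primitive_root_of_unity q lam"
    and g_hol: "\<exists>U. open U \<and> 0 \<in> U \<and> g holomorphic_on U"
    and g0: "g 0 = 0" and g'0: "deriv g 0 = lam"
    and f_def: "f = g ^^ q"
    and f_exp: "(\<lambda>z. f z - (z + z ^ (q + 1) + b * z ^ (2 * q + 1))) \<in> O[at 0](\<lambda>z. z ^ (2 * q + 2))"
    and r0: "0 < r0" "r0 < 1"
    and S: "open S" "cball 0 r0 \<subseteq> S" "f holomorphic_on S" "inj_on f S"
    and f_fix: "\<forall>z\<in>cball 0 r0. f z = z \<longrightarrow> z = 0"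
    and f_Re: "\<forall>z\<in>cball 0 r0. Re (deriv f z) > 0"
    and gn_hol: "\<forall>n. \<exists>U. open U \<and> 0 \<in> U \<and> gn n holomorphic_on U"
    and gn0: "\<forall>n. gn n 0 = 0" and gn'0: "\<forall>n. deriv (gn n) 0 = lamn n"
    and lamn: "\<forall>n. norm (lamn n) \<noteq> 1"
    and fn_def: "\<forall>n. fn n = gn n ^^ q"
    and fn_hol: "\<forall>n. \<exists>T. open T \<and> cball 0 r0 \<subseteq> T \<and> fn n holomorphic_on T"
    and fn_lim: "uniform_limit (cball 0 r0) fn f sequentially"
    and fn_fix: "eventually (\<lambda>n. is_q_cycle (gn n) q (Orb n) \<and> 0 \<notin> Orb n \<and>
                   {z\<in>cball 0 r0. fn n z = z} = {0} \<union> Orb n) sequentially"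
    and r1: "0 < r1" "r1 < r0 / 2"
    and r1_f: "f ` cball 0 r1 \<subseteq> ball 0 r0"
    and r1_finv: "cball 0 r1 \<subseteq> f ` S" "inj_on (inv_into S f) (cball 0 r1)"
                 "inv_into S f ` cball 0 r1 \<subseteq> ball 0 r0"
    and r1_fn: "eventually (\<lambda>n. \<forall>z\<in>cball 0 r1. norm (fn n z - z) \<le> r1 / 2) sequentially"
  shows "\<exists>r2. 0 < r2 \<and> r2 < r1 \<and>
           eventually (\<lambda>n. \<forall>z0 z1 z2. z1 = fn n z0 \<and> z2 = fn n z1 \<and>
               z0 \<in> ball 0 r2 \<and> z1 \<in> ball 0 r2 \<and> z2 \<in> ball 0 r2 \<and>
               fn n z0 \<noteq> z0 \<and> fn n z1 \<noteq> z1 \<and> fn n z2 \<noteq> z2 \<longrightarrow>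
               homotopic_paths (ball 0 r1 - ({0} \<union> Orb n))
                 (linepath z1 z2) (fn n \<circ> linepath z0 z1)) sequentially"
proof -
  have f0: "f 0 = 0" unfolding f_def using funpow_fix0[of g q] g0 by simp
  have S0: "0 \<in> S" using S(2) r0 by auto
  have df0: "deriv f 0 = 1" using deriv_at0_one[OF q S(1) S0 S(3) f0 f_exp] .
  have "deriv f holomorphic_on S" by (rule holomorphic_deriv[OF S(3) S(1)])
  then have "continuous_on S (deriv f)" by (rule holomorphic_on_imp_continuous_on)
  then have "isCont (deriv f) 0" using S(1) S0 by (simp add: continuous_on_eq_continuous_at)
  then have "(deriv f \<longlongrightarrow> deriv f 0) (at 0)" by (simp add: isCont_def)
  then obtain d where d: "d > 0" "\<forall>x. x \<noteq> 0 \<and> norm (x - 0) < d \<longrightarrow> norm (deriv f x - deriv f 0) < 1/8"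
    using LIM_D[of "deriv f" "deriv f 0" 0 "1/8"] by auto
  have dfx: "norm (deriv f x - 1) < 1/8" if "norm x < d" for x
    using d that df0 by (cases "x = 0") auto
  define R where "R = min (d/2) (r1/2)"
  have R0: "0 < R" using d r1 by (simp add: R_def)
  have Rr1: "R \<le> r1" using r1 by (simp add: R_def)
  have Rr0: "R \<le> r0 / 2" using r1 by (simp add: R_def)
  have Rd: "R < d" using d by (simp add: R_def)
  define r2 where "r2 = R / 2"
  have E2: "eventually (\<lambda>n. \<forall>x\<in>cball 0 r0. dist (fn n x) (f x) < r0 / 16) sequentially"
    using uniform_limitD[OF fn_lim, of "r0/16"] r0 by simp
  show ?thesis
  proof (intro exI conjI)
    show "0 < r2" using R0 by (simp add: r2_def)
    show "r2 < r1" using R0 Rr1 by (simp add: r2_def)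
    show "eventually (\<lambda>n. \<forall>z0 z1 z2. z1 = fn n z0 \<and> z2 = fn n z1 \<and>
               z0 \<in> ball 0 r2 \<and> z1 \<in> ball 0 r2 \<and> z2 \<in> ball 0 r2 \<and>
               fn n z0 \<noteq> z0 \<and> fn n z1 \<noteq> z1 \<and> fn n z2 \<noteq> z2 \<longrightarrow>
               homotopic_paths (ball 0 r1 - ({0} \<union> Orb n))
                 (linepath z1 z2) (fn n \<circ> linepath z0 z1)) sequentially"
      using fn_fix E2
    proof eventually_elim
      case (elim n)
      obtain T where T: "open T" "cball 0 r0 \<subseteq> T" "fn n holomorphic_on T"
        using fn_hol by blast
      define T' where "T' = T \<inter> S"
      have T': "open T'" "cball 0 r0 \<subseteq> T'" "fn n holomorphic_on T'" "f holomorphic_on T'"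
        using T S unfolding T'_def by (auto intro: holomorphic_on_subset)
      have BR: "ball 0 R \<subseteq> cball 0 r0" using Rr0 r0 by auto
      have D: "\<forall>x\<in>ball 0 R. norm (deriv (fn n) x - 1) \<le> 1/4"
      proof
        fix x :: complex assume x: "x \<in> ball 0 R"
        have "norm (deriv (fn n) x - deriv f x) \<le> (r0/16) / (r0/2)"
        proof (rule deriv_close[OF T' r0(1)])
          show "\<forall>z\<in>cball 0 r0. norm (fn n z - f z) \<le> r0 / 16"
            using elim(2) by (auto simp: dist_norm less_imp_le)
          show "norm x \<le> r0 / 2" using x Rr0 by simp
        qed
        also have "(r0/16) / (r0/2) = 1/8" using r0 by simp
        finally have A: "norm (deriv (fn n) x - deriv f x) \<le> 1/8" .
        have B: "norm (deriv f x - 1) < 1/8" using x Rd by (intro dfx) simp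
        have "norm (deriv (fn n) x - 1) \<le> norm (deriv (fn n) x - deriv f x) + norm (deriv f x - 1)"
          using norm_triangle_ineq[of "deriv (fn n) x - deriv f x" "deriv f x - 1"] by simp
        then show "norm (deriv (fn n) x - 1) \<le> 1/4" using A B by simp
      qed
      have fix_set: "{z\<in>cball 0 r0. fn n z = z} = {0} \<union> Orb n" using elim(1) by blast
      have P: "\<forall>p\<in>{0} \<union> Orb n. fn n p = p" using fix_set by blast
      have F0: "fn n 0 = 0" using P by blast
      show ?case
      proof (intro allI impI)
        fix z0 z1 z2
        assume h: "z1 = fn n z0 \<and> z2 = fn n z1 \<and>
               z0 \<in> ball 0 r2 \<and> z1 \<in> ball 0 r2 \<and> z2 \<in> ball 0 r2 \<and>
               fn n z0 \<noteq> z0 \<and> fn n z1 \<noteq> z1 \<and> fn n z2 \<noteq> z2"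
        show "homotopic_paths (ball 0 r1 - ({0} \<union> Orb n)) (linepath z1 z2) (fn n \<circ> linepath z0 z1)"
        proof (rule homotopy_part[OF T'(1) _ T'(3) D F0 Rr1 P])
          show "ball 0 R \<subseteq> T'" using BR T'(2) by blast
        qed (use h in \<open>auto simp: r2_def\<close>)
      qed
    qed
  qed
qed

end
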